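(* Let $A$ be a dilation, $X$ a ball quasi-Banach function space, $q\in[1,\infty)$, $d\in\mathbb Z_+$ and $s\in(0,\infty)$. For $f\in L^q_{\mathrm{loc}}(\mathbb R^n)$ define $$\widetilde{\|f\|}_{\mathcal L^A_{X,q,d,s}(\mathbb R^n)}:=\sup\left\|\left\{\sum_{i\in\mathbb N}\left[\frac{\lambda_i}{\|\mathbf 1_{B^{(i)}}\|_X}\right]^s\mathbf 1_{B^{(i)}}\right\}^{1/s}\right\|_X^{-1}\sum_{j\in\mathbb N}\frac{\lambda_j|B^{(j)}|}{\|\mathbf 1_{B^{(j)}}\|_X}\left[\frac1{|B^{(j)}|}\int_{B^{(j)}}\left|f(x)-P^d_{B^{(j)}}f(x)\right|^q\,dx\right]^{1/q},$$ where the supremum is taken over all sequences $\{B^{(j)}\}_{j\in\mathbb N}\subset\mathcal B$ and $\{\lambda_j\}_{j\in\mathbb N}\subset[0,\infty)$ such that $\left\|\left\{\sum_{j\in\mathbb N}\left[\frac{\lambda_j}{\|\mathbf 1_{B^{(j)}}\|_X}\right]^s\mathbf 1_{B^{(j)}}\right\}^{1/s}\right\|_X\in(0,\infty)$. Then, for every $f\in L^q_{\mathrm{loc}}(\mathbb R^n)$, $\widetilde{\|f\|}_{\mathcal L^A_{X,q,d,s}(\mathbb R^n)}=\|f\|_{\mathcal L^A_{X,q,d,s}(\mathbb R^n)}$.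
   Context: A real $n\times n$ matrix $A$ is a dilation if all its eigenvalues have modulus $>1$. Let $b:=|\det A|$. Fix an open ellipsoid $\Delta$ symmetric about the origin with $|\Delta|=1$ and $r>1$ with $\Delta\subset r\Delta\subset A\Delta$; put $B_k:=A^k\Delta$ ($k\in\mathbb Z$), so $|B_k|=b^k$, and $\mathcal B:=\{x+B_k:x\in\mathbb R^n,k\in\mathbb Z\}$ (dilated balls). Let $\mathscr M(\mathbb R^n)$ be the set of measurable functions on $\mathbb R^n$. A quasi-normed linear space $X\subset\mathscr M(\mathbb R^n)$ whose quasi-norm $\|\cdot\|_X$ is defined on all of $\mathscr M(\mathbb R^n)$ (possibly infinite) is a ball quasi-Banach function space if: (i) $\|f\|_X=0$ implies $f=0$ a.e.; (ii) $|g|\le|f|$ a.e. implies $\|g\|_X\le\|f\|_X$; (iii) $0\le f_m\uparrow f$ a.e. implies $\|f_m\|_X\uparrow\|f\|_X$; (iv) $\mathbf 1_B\in X$ for all $B\in\mathcal B$. $\mathcal P_d(\mathbb R^n)$ denotes polynomials of degree at most $d$; for $B\in\mathcal B$ and locally integrable $g$, $P^d_Bg$ is the unique $P\in\mathcal P_d(\mathbb R^n)$ with $\int_B(g-P)h\,dx=0$ for all $h\in\mathcal P_d(\mathbb R^n)$. The anisotropic ball Campanato-type space $\mathcal L^A_{X,q,d,s}(\mathbb R^n)$ is the set of $f\in L^q_{\mathrm{loc}}(\mathbb R^n)$ with $$\|f\|_{\mathcal L^A_{X,q,d,s}(\mathbb R^n)}:=\sup\left\|\left\{\sum_{i=1}^m\left[\frac{\lambda_i}{\|\mathbf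 1_{B^{(i)}}\|_X}\right]^s\mathbf 1_{B^{(i)}}\right\}^{1/s}\right\|_X^{-1}\sum_{j=1}^m\frac{\lambda_j|B^{(j)}|}{\|\mathbf 1_{B^{(j)}}\|_X}\left[\frac1{|B^{(j)}|}\int_{B^{(j)}}\left|f(x)-P^d_{B^{(j)}}f(x)\right|^q\,dx\right]^{1/q}<\infty,$$ the supremum over all $m\in\mathbb N$, $\{B^{(j)}\}_{j=1}^m\subset\mathcal B$ and $\{\lambda_j\}_{j=1}^m\subset[0,\infty)$ with $\sum_{j=1}^m\lambda_j\ne0$. *)

theory Defs
  imports "HOL-Analysis.Analysis"
begin

definition cmatrix :: "real^'n^'n \<Rightarrow> complex^'n^'n" where
  "cmatrix A = (\<chi> i j. complex_of_real (A $ i $ j))"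

definition dilation :: "real^'n^'n \<Rightarrow> bool" where
  "dilation A \<longleftrightarrow> (\<forall>z::complex. det (mat z - cmatrix A) = 0 \<longrightarrow> 1 < cmod z)"

definition ellipsoid0 :: "(real^'n) set \<Rightarrow> bool" where
  "ellipsoid0 D \<longleftrightarrow> (\<exists>P::real^'n^'n. invertible P \<and> D = (\<lambda>x. P *v x) ` ball 0 1)"

definition admissible_data :: "real^'n^'n \<Rightarrow> (real^'n) set \<Rightarrow> real \<Rightarrow> bool" where
  "admissible_data A D r \<longleftrightarrow> dilation A \<and> ellipsoid0 D \<and> measure lebesgue D = 1 \<and> 1 < r
     \<and> D \<subseteq> (\<lambda>x. r *\<^sub>R x) ` D \<and> (\<lambda>x. r *\<^sub>R x) ` D \<subseteq> (\<lambda>x. A *v x) ` D"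

definition dball :: "real^'n^'n \<Rightarrow> (real^'n) set \<Rightarrow> int \<Rightarrow> (real^'n) set" where
  "dball A D k = (if 0 \<le> k then ((\<lambda>x. A *v x) ^^ nat k) ` D
                  else ((\<lambda>x. matrix_inv A *v x) ^^ nat (- k)) ` D)"

definition dballs :: "real^'n^'n \<Rightarrow> (real^'n) set \<Rightarrow> (real^'n) set set" where
  "dballs A D = {(\<lambda>y. x + y) ` dball A D k | x k. True}"

text \<open>The quasi-norm is a functional Xn on measurable real functions with values in [0,\<infinity>];
  the space X is the set of measurable f with Xn f < \<infinity>.\<close>
definition ball_qBfs :: "real^'n^'n \<Rightarrow> (real^'n) set \<Rightarrow> ((real^'n \<Rightarrow> real) \<Rightarrow> ennreal) \<Rightarrow> bool" where
  "ball_qBfs A D Xn \<longleftrightarrow>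
     \<comment> \<open>quasi-norm\<close>
     (\<exists>K::real. 1 \<le> K \<and> (\<forall>f g. f \<in> borel_measurable lebesgue \<longrightarrow> g \<in> borel_measurable lebesgue \<longrightarrow>
          Xn (\<lambda>x. f x + g x) \<le> ennreal K * (Xn f + Xn g)))
   \<and> (\<forall>f c. f \<in> borel_measurable lebesgue \<longrightarrow> Xn (\<lambda>x. c * f x) = ennreal \<bar>c\<bar> * Xn f)
   \<comment> \<open>(i)\<close>
   \<and> (\<forall>f. f \<in> borel_measurable lebesgue \<longrightarrow> Xn f = 0 \<longrightarrow> (AE x in lebesgue. f x = 0))
   \<comment> \<open>(ii)\<close>
   \<and> (\<forall>f g. f \<in> borel_measurable lebesgue \<longrightarrow> g \<in> borel_measurable lebesgue \<longrightarrow>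
          (AE x in lebesgue. \<bar>g x\<bar> \<le> \<bar>f x\<bar>) \<longrightarrow> Xn g \<le> Xn f)
   \<comment> \<open>(iii)\<close>
   \<and> (\<forall>F f. (\<forall>m. F m \<in> borel_measurable lebesgue) \<longrightarrow> f \<in> borel_measurable lebesgue \<longrightarrow>
          (AE x in lebesgue. (\<forall>m. 0 \<le> F m x) \<and> incseq (\<lambda>m. F m x) \<and> (\<lambda>m. F m x) \<longlonglongrightarrow> f x) \<longrightarrow>
          incseq (\<lambda>m. Xn (F m)) \<and> (\<lambda>m. Xn (F m)) \<longlonglongrightarrow> Xn f)
   \<comment> \<open>(iv)\<close>
   \<and> (\<forall>B \<in> dballs A D. Xn (indicator B) < \<infinity>)"

definition mono_exps :: "nat \<Rightarrow> ('n::finite \<Rightarrow> nat) set" where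
  "mono_exps d = {\<alpha>. (\<Sum>i\<in>UNIV. \<alpha> i) \<le> d}"

definition poly_fun :: "nat \<Rightarrow> (real^'n \<Rightarrow> real) \<Rightarrow> bool" where
  "poly_fun d p \<longleftrightarrow> (\<exists>c::('n \<Rightarrow> nat) \<Rightarrow> real.
      p = (\<lambda>x. \<Sum>\<alpha>\<in>mono_exps d. c \<alpha> * (\<Prod>i\<in>UNIV. (x $ i) ^ \<alpha> i)))"

definition PB :: "nat \<Rightarrow> (real^'n) set \<Rightarrow> (real^'n \<Rightarrow> real) \<Rightarrow> (real^'n \<Rightarrow> real)" where
  "PB d B g = (THE P. poly_fun d P \<and>
      (\<forall>h. poly_fun d h \<longrightarrow> (LINT x:B|lebesgue. (g x - P x) * h x) = 0))"

definition Lq_loc :: "real \<Rightarrow> (real^'n \<Rightarrow> real) set" where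
  "Lq_loc q = {f. f \<in> borel_measurable lebesgue \<and>
      (\<forall>K. compact K \<longrightarrow> set_integrable lebesgue K (\<lambda>x. \<bar>f x\<bar> powr q))}"

definition osc :: "nat \<Rightarrow> real \<Rightarrow> (real^'n \<Rightarrow> real) \<Rightarrow> (real^'n) set \<Rightarrow> real" where
  "osc d q f B = ((1 / measure lebesgue B) *
       (LINT x:B|lebesgue. \<bar>f x - PB d B f x\<bar> powr q)) powr (1 / q)"

text \<open>\<open>nX Xn B\<close> = norm of the indicator of B in X (finite by (iv)).\<close>
definition nX :: "((real^'n \<Rightarrow> real) \<Rightarrow> ennreal) \<Rightarrow> (real^'n) set \<Rightarrow> real" where
  "nX Xn B = enn2real (Xn (indicator B))"

definition ssum :: "((real^'n \<Rightarrow> real) \<Rightarrow> ennreal) \<Rightarrow> real \<Rightarrow> (nat \<Rightarrow> (real^'n) set)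
     \<Rightarrow> (nat \<Rightarrow> real) \<Rightarrow> nat \<Rightarrow> real^'n \<Rightarrow> real" where
  "ssum Xn s B lam m x = (\<Sum>i<m. (lam i / nX Xn (B i)) powr s * indicator (B i) x) powr (1 / s)"

definition cterm :: "((real^'n \<Rightarrow> real) \<Rightarrow> ennreal) \<Rightarrow> nat \<Rightarrow> real \<Rightarrow> (real^'n \<Rightarrow> real)
     \<Rightarrow> (nat \<Rightarrow> (real^'n) set) \<Rightarrow> (nat \<Rightarrow> real) \<Rightarrow> nat \<Rightarrow> real" where
  "cterm Xn d q f B lam j = lam j * measure lebesgue (B j) / nX Xn (B j) * osc d q f (B j)"

text \<open>The Campanato-type (quasi-)norm with finite families (m members, indices 0..m-1).\<close>
definition campanato_norm :: "real^'n^'n \<Rightarrow> (real^'n) set \<Rightarrow> ((real^'n \<Rightarrow> real) \<Rightarrow> ennreal)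
     \<Rightarrow> real \<Rightarrow> nat \<Rightarrow> real \<Rightarrow> (real^'n \<Rightarrow> real) \<Rightarrow> ennreal" where
  "campanato_norm A D Xn q d s f =
     (SUP (m, B, lam) \<in> {(m, B, lam). (\<forall>j<m. B j \<in> dballs A D \<and> 0 \<le> lam j) \<and> (\<Sum>j<m. lam j) \<noteq> 0}.
        inverse (Xn (ssum Xn s B lam m)) * ennreal (\<Sum>j<m. cterm Xn d q f B lam j))"

text \<open>X-norm of the infinite s-sum: via (iii), the supremum of the X-norms of the increasing
  partial s-sums (this also covers the case where the pointwise series diverges).\<close>
definition ssum_inf_norm :: "((real^'n \<Rightarrow> real) \<Rightarrow> ennreal) \<Rightarrow> real \<Rightarrow> (nat \<Rightarrow> (real^'n) set)
     \<Rightarrow> (nat \<Rightarrow> real) \<Rightarrow> ennreal" where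
  "ssum_inf_norm Xn s B lam = (SUP m. Xn (ssum Xn s B lam m))"

definition campanato_norm_seq :: "real^'n^'n \<Rightarrow> (real^'n) set \<Rightarrow> ((real^'n \<Rightarrow> real) \<Rightarrow> ennreal)
     \<Rightarrow> real \<Rightarrow> nat \<Rightarrow> real \<Rightarrow> (real^'n \<Rightarrow> real) \<Rightarrow> ennreal" where
  "campanato_norm_seq A D Xn q d s f =
     (SUP (B, lam) \<in> {(B, lam). (\<forall>j. B j \<in> dballs A D \<and> 0 \<le> lam j)
                         \<and> 0 < ssum_inf_norm Xn s B lam \<and> ssum_inf_norm Xn s B lam < \<infinity>}.
        inverse (ssum_inf_norm Xn s B lam) * (\<Sum>j. ennreal (cterm Xn d q f B lam j)))"

end

theory Submission imports Defs begin

lemma ennreal_inv_anti: "(a::ennreal) \<le> b \<Longrightarrow> inverse b \<le> inverse a"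
proof (cases "a = 0")
  case True then show ?thesis by simp
next
  case False
  assume ab: "a \<le> b"
  show ?thesis
  proof (cases "b = top")
    case True then show ?thesis by simp
  next
    case bfin: False
    then have afin: "a \<noteq> top" using ab top_unique by auto
    obtain x where x: "a = ennreal x" "0 \<le> x" using afin ennreal_cases by (metis top.not_eq_extremum)
    obtain y where y: "b = ennreal y" "0 \<le> y" using bfin ennreal_cases by (metis top.not_eq_extremum)
    have "0 < x" using x False by (metis ennreal_0 order_le_less)
    moreover have "x \<le> y" using ab x y by (simp add: ennreal_le_iff)
    ultimately show ?thesis using x y by (simp add: inverse_ennreal le_imp_inverse_le ennreal_leI)
  qed
qed

lemma lin_ball_meas:
  fixes h :: "real^'n \<Rightarrow> real^'n"
  assumes "linear h"
  shows "h ` ball 0 1 \<in> sets lebesgue"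
proof (cases "inj h")
  case True
  then obtain g where g: "linear g" "\<And>x. g (h x) = x" "\<And>x. h (g x) = x"
    using assms linear_injective_isomorphism by blast
  have "h ` ball 0 1 = g -` ball 0 1"
  proof
    show "h ` ball 0 1 \<subseteq> g -` ball 0 1" using g(2) by auto
    show "g -` ball 0 1 \<subseteq> h ` ball 0 1"
    proof
      fix y assume "y \<in> g -` ball 0 1"
      then have "g y \<in> ball 0 1" by simp
      then show "y \<in> h ` ball 0 1" using g(3)[of y] by (metis image_eqI)
    qed
  qed
  moreover have "open (g -` ball 0 1)"
    using g(1) by (intro open_vimage) (auto simp: linear_continuous_on linear_conv_bounded_linear)
  ultimately show ?thesis by simp
next
  case False
  then show ?thesis using assms negligible_linear_singular_image negligible_imp_sets by blast
qed

lemma linear_funpow: fixes f :: "'a::real_vector \<Rightarrow> 'a" shows "linear f \<Longrightarrow> linear (f ^^ k)"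
proof (induction k)
  case 0
  show ?case unfolding funpow.simps(1) id_def by (simp add: linear_iff)
next
  case (Suc k)
  then show ?case using linear_compose[of "f ^^ k" f] by (simp add: o_def)
qed

lemma dballs_meas:
  fixes A :: "real^'n^'n" and D :: "(real^'n) set"
  assumes "ellipsoid0 D" "B \<in> dballs A D"
  shows "B \<in> sets lebesgue"
proof -
  obtain P :: "real^'n^'n" where D: "D = (\<lambda>x. P *v x) ` ball 0 1"
    using assms(1) unfolding ellipsoid0_def by blast
  obtain x k where B: "B = (\<lambda>y. x + y) ` dball A D k"
    using assms(2) unfolding dballs_def by blast
  have "\<exists>g::real^'n \<Rightarrow> real^'n. linear g \<and> dball A D k = g ` ball 0 1"
  proof (cases "0 \<le> k")
    case True
    have "linear ((\<lambda>x. A *v x) ^^ nat k \<circ> (\<lambda>x. P *v x))"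
      by (intro linear_compose linear_funpow matrix_vector_mul_linear)
    then show ?thesis using True unfolding dball_def D by (metis image_comp)
  next
    case False
    have "linear ((\<lambda>x. matrix_inv A *v x) ^^ nat (-k) \<circ> (\<lambda>x. P *v x))"
      by (intro linear_compose linear_funpow matrix_vector_mul_linear)
    then show ?thesis using False unfolding dball_def D by (metis image_comp)
  qed
  then show ?thesis unfolding B using lin_ball_meas lebesgue_sets_translation by metis
qed

lemma ssum_meas:
  assumes "\<And>i. i < m \<Longrightarrow> B i \<in> sets lebesgue"
  shows "ssum Xn s B lam m \<in> borel_measurable lebesgue"
proof -
  have m1: "(\<lambda>x. \<Sum>i<m. (lam i / nX Xn (B i)) powr s * indicator (B i) x) \<in> borel_measurable lebesgue"
    by (intro borel_measurable_sum borel_measurable_times borel_measurable_const borel_measurable_indicator) (use assms in auto)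
  show ?thesis unfolding ssum_def by (rule powr_real_measurable[OF m1 borel_measurable_const])
qed

lemma ssum_nonneg: "0 \<le> ssum Xn s B lam m x"
  unfolding ssum_def by simp

lemma ssum_mono:
  assumes "k \<le> m" "0 < s"
  shows "ssum Xn s B lam k x \<le> ssum Xn s B lam m x"
proof -
  have a: "(\<Sum>i<k. (lam i / nX Xn (B i)) powr s * indicator (B i) x)
      \<le> (\<Sum>i<m. (lam i / nX Xn (B i)) powr s * indicator (B i) x)"
    by (rule sum_mono2) (use assms in auto)
  have b: "0 \<le> (\<Sum>i<k. (lam i / nX Xn (B i)) powr s * indicator (B i) x)"
    by (rule sum_nonneg) simp
  show ?thesis unfolding ssum_def
    by (rule powr_mono2[OF _ b a]) (use assms in simp)
qed

lemma ssum_lower: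
  assumes "j < m" "x \<in> B j" "0 < s"
  shows "lam j / nX Xn (B j) \<le> ssum Xn s B lam m x"
proof (cases "lam j / nX Xn (B j) \<le> 0")
  case True then show ?thesis using ssum_nonneg[of Xn s B lam m x] by linarith
next
  case False
  have "lam j / nX Xn (B j) = ((lam j / nX Xn (B j)) powr s * indicator (B j) x) powr (1/s)"
  proof -
    have key: "\<And>c::real. 0 < c \<Longrightarrow> c = (c powr s * 1) powr (1/s)"
      using assms(3) by (simp add: powr_powr)
    have "0 < lam j / nX Xn (B j)" using False by simp
    then show ?thesis using key assms(2) by simp
  qed
  also have "\<dots> \<le> ssum Xn s B lam m x" unfolding ssum_def
  proof (rule powr_mono2)
    show "0 \<le> 1 / s" using assms by simp
    show "0 \<le> (lam j / nX Xn (B j)) powr s * indicator (B j) x" by simp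
    show "(lam j / nX Xn (B j)) powr s * indicator (B j) x
        \<le> (\<Sum>i<m. (lam i / nX Xn (B i)) powr s * indicator (B i) x)"
      by (rule member_le_sum[where f="\<lambda>i. (lam i / nX Xn (B i)) powr s * indicator (B i) x"]) (use assms in auto)
  qed
  finally show ?thesis .
qed

lemma cterm_nonneg: "0 \<le> lam j \<Longrightarrow> 0 \<le> cterm Xn d q f B lam j"
  unfolding cterm_def
  by (intro mult_nonneg_nonneg divide_nonneg_nonneg) (auto simp: nX_def osc_def)

theorem proposition3p5:
  fixes A :: "real^'n^'n" and D :: "(real^'n) set" and r :: real
    and Xn :: "(real^'n \<Rightarrow> real) \<Rightarrow> ennreal"
    and q :: real and d :: nat and s :: real and f :: "real^'n \<Rightarrow> real"
  assumes "admissible_data A D r"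
    and "ball_qBfs A D Xn"
    and "1 \<le> q" and "0 < s"
    and "f \<in> Lq_loc q"
  shows "campanato_norm_seq A D Xn q d s f = campanato_norm A D Xn q d s f"
proof -
  have ell: "ellipsoid0 D" using assms(1) unfolding admissible_data_def by (elim conjE) assumption
  note bq = assms(2)[unfolded ball_qBfs_def]
  have hom0: "\<forall>f c. f \<in> borel_measurable lebesgue \<longrightarrow> Xn (\<lambda>x. c * f x) = ennreal \<bar>c\<bar> * Xn f"
    using bq by (elim conjE) assumption
  have ax10: "\<forall>f. f \<in> borel_measurable lebesgue \<longrightarrow> Xn f = 0 \<longrightarrow> (AE x in lebesgue. f x = 0)"
    using bq by (elim conjE) assumption
  have ax20: "\<forall>f g. f \<in> borel_measurable lebesgue \<longrightarrow> g \<in> borel_measurable lebesgue \<longrightarrow>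
          (AE x in lebesgue. \<bar>g x\<bar> \<le> \<bar>f x\<bar>) \<longrightarrow> Xn g \<le> Xn f"
    using bq by (elim conjE) assumption
  have hom: "\<And>g c. g \<in> borel_measurable lebesgue \<Longrightarrow> Xn (\<lambda>x. c * g x) = ennreal \<bar>c\<bar> * Xn g"
    using hom0 by blast
  have ax1: "\<And>g. g \<in> borel_measurable lebesgue \<Longrightarrow> Xn g = 0 \<Longrightarrow> (AE x in lebesgue. g x = 0)"
    using ax10 by blast
  have ax2: "\<And>g h. g \<in> borel_measurable lebesgue \<Longrightarrow> h \<in> borel_measurable lebesgue \<Longrightarrow>
          (AE x in lebesgue. \<bar>h x\<bar> \<le> \<bar>g x\<bar>) \<Longrightarrow> Xn h \<le> Xn g"
    using ax20 by blast
  have X0: "Xn (\<lambda>x. 0) = 0"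
    using hom[of "\<lambda>x. 0" 0] by simp
  define S where "S = {(m::nat, B, lam). (\<forall>j<m. B j \<in> dballs A D \<and> 0 \<le> lam j) \<and> (\<Sum>j<m. lam j) \<noteq> (0::real)}"
  define T where "T = {(B, lam). (\<forall>j. B j \<in> dballs A D \<and> 0 \<le> lam j)
                         \<and> 0 < ssum_inf_norm Xn s B lam \<and> ssum_inf_norm Xn s B lam < \<infinity>}"
  define F where "F = (\<lambda>(m, B, lam). inverse (Xn (ssum Xn s B lam m)) * ennreal (\<Sum>j<m. cterm Xn d q f B lam j))"
  define G where "G = (\<lambda>(B, lam). inverse (ssum_inf_norm Xn s B lam) * (\<Sum>j. ennreal (cterm Xn d q f B lam j)))"
  have fin: "campanato_norm A D Xn q d s f = (SUP z \<in> S. F z)"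
    unfolding campanato_norm_def S_def F_def by (rule refl)
  have seq: "campanato_norm_seq A D Xn q d s f = (SUP z \<in> T. G z)"
    unfolding campanato_norm_seq_def T_def G_def by (rule refl)
  have le1: "G z \<le> (SUP z \<in> S. F z)" if "z \<in> T" for z
  proof -
    obtain B lam where z: "z = (B, lam)" by (cases z)
    have Bl: "\<And>j. B j \<in> dballs A D" "\<And>j. 0 \<le> lam j" using that z unfolding T_def by auto
    define N where "N = ssum_inf_norm Xn s B lam"
    have "G z = inverse N * (SUP m. \<Sum>j<m. ennreal (cterm Xn d q f B lam j))"
      unfolding G_def z N_def by (simp add: suminf_eq_SUP)
    also have "\<dots> = (SUP m. inverse N * (\<Sum>j<m. ennreal (cterm Xn d q f B lam j)))"
      by (simp add: SUP_mult_left_ennreal)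
    also have "\<dots> \<le> (SUP z \<in> S. F z)"
    proof (rule SUP_least)
      fix m
      have ce: "(\<Sum>j<m. ennreal (cterm Xn d q f B lam j)) = ennreal (\<Sum>j<m. cterm Xn d q f B lam j)"
        by (rule sum_ennreal) (simp add: cterm_nonneg Bl(2))
      show "inverse N * (\<Sum>j<m. ennreal (cterm Xn d q f B lam j)) \<le> (SUP z \<in> S. F z)"
      proof (cases "(\<Sum>j<m. lam j) = 0")
        case True
        then have "\<forall>j\<in>{..<m}. lam j = 0" using Bl(2) sum_nonneg_eq_0_iff[of "{..<m}" lam] by auto
        then have "\<forall>j\<in>{..<m}. cterm Xn d q f B lam j = 0" unfolding cterm_def by simp
        then show ?thesis by simp
      next
        case False
        then have mS: "(m, B, lam) \<in> S" unfolding S_def using Bl by auto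
        have "Xn (ssum Xn s B lam m) \<le> N" unfolding N_def ssum_inf_norm_def by (rule SUP_upper) simp
        then have "inverse N * (\<Sum>j<m. ennreal (cterm Xn d q f B lam j)) \<le> F (m, B, lam)"
          unfolding F_def using ce by (simp add: mult_right_mono ennreal_inv_anti)
        also have "\<dots> \<le> (SUP z \<in> S. F z)" using mS by (rule SUP_upper)
        finally show ?thesis .
      qed
    qed
    finally show ?thesis .
  qed
  have le2: "F z \<le> (SUP z \<in> T. G z)" if "z \<in> S" for z
  proof -
    obtain m B lam where z: "z = (m, B, lam)" by (cases z)
    have Bl: "\<And>j. j < m \<Longrightarrow> B j \<in> dballs A D" "\<And>j. j < m \<Longrightarrow> 0 \<le> lam j" "(\<Sum>j<m. lam j) \<noteq> 0"
      using that z unfolding S_def by auto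
    have Bm: "\<And>j. j < m \<Longrightarrow> B j \<in> sets lebesgue" using Bl(1) dballs_meas[OF ell] by blast
    have m0: "0 < m" using Bl(3) by (cases m) auto
    define M where "M = Xn (ssum Xn s B lam m)"
    define C where "C = (\<Sum>j<m. cterm Xn d q f B lam j)"
    have Fz: "F z = inverse M * ennreal C" unfolding F_def z M_def C_def by simp
    show ?thesis
    proof (cases "M = \<infinity> \<or> C = 0")
      case True
      then show ?thesis unfolding Fz by auto
    next
      case False
      then have Mfin: "M < \<infinity>" and C0: "C \<noteq> 0" by (auto simp: top.not_eq_extremum)
      obtain j where j: "j < m" "cterm Xn d q f B lam j \<noteq> 0"
        using sum.not_neutral_contains_not_neutral[of "cterm Xn d q f B lam" "{..<m}"] C0
        unfolding C_def by blast
      have pos: "0 < lam j / nX Xn (B j)"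
      proof -
        have "lam j \<noteq> 0" "nX Xn (B j) \<noteq> 0" using j(2) unfolding cterm_def by auto
        moreover have "0 \<le> nX Xn (B j)" unfolding nX_def by simp
        ultimately show ?thesis using Bl(2)[OF j(1)] by simp
      qed
      have Mpos: "0 < M"
      proof (rule ccontr)
        assume "\<not> 0 < M"
        then have "M = 0" by (simp add: not_gr_zero)
        then have "AE x in lebesgue. ssum Xn s B lam m x = 0"
          using ax1[OF ssum_meas[of m B Xn s lam, OF Bm]] unfolding M_def by blast
        then have "AE x in lebesgue. \<bar>indicator (B j) x :: real\<bar> \<le> \<bar>0\<bar>"
        proof (rule AE_mp, intro AE_I2 impI)
          fix x assume "ssum Xn s B lam m x = 0"
          then have "x \<notin> B j"
          proof -
            assume h: "ssum Xn s B lam m x = 0"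
            show "x \<notin> B j"
            proof
              assume "x \<in> B j"
              then have "lam j / nX Xn (B j) \<le> ssum Xn s B lam m x"
                by (rule ssum_lower[OF j(1) _ assms(4)])
              then show False using h pos by linarith
            qed
          qed
          then show "\<bar>indicator (B j) x :: real\<bar> \<le> \<bar>0\<bar>" by simp
        qed
        then have "Xn (indicator (B j)) \<le> Xn (\<lambda>x. 0)"
          using ax2[of "\<lambda>x. 0" "indicator (B j)"] Bm[OF j(1)] by simp
        then have "nX Xn (B j) = 0" unfolding nX_def using X0 by simp
        then show False using pos by simp
      qed
      define B' where "B' = (\<lambda>i. if i < m then B i else B 0)"
      define lam' where "lam' = (\<lambda>i. if i < m then lam i else 0)"
      have ss: "ssum Xn s B' lam' k = ssum Xn s B lam (min k m)" for k
      proof -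
        have "(\<Sum>i<k. (lam' i / nX Xn (B' i)) powr s * indicator (B' i) x)
            = (\<Sum>i<min k m. (lam i / nX Xn (B i)) powr s * indicator (B i) x)" for x
        proof (cases "k \<le> m")
          case True then show ?thesis unfolding B'_def lam'_def by (intro sum.cong) auto
        next
          case False
          then have "(\<Sum>i<k. (lam' i / nX Xn (B' i)) powr s * indicator (B' i) x)
              = (\<Sum>i<m. (lam' i / nX Xn (B' i)) powr s * indicator (B' i) x)"
            by (intro sum.mono_neutral_right) (auto simp: lam'_def)
          then show ?thesis using False unfolding B'_def lam'_def by simp
        qed
        then show ?thesis unfolding ssum_def by simp
      qed
      have N: "ssum_inf_norm Xn s B' lam' = M"
      proof (rule antisym)
        show "ssum_inf_norm Xn s B' lam' \<le> M"
          unfolding ssum_inf_norm_def ss M_def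
        proof (rule SUP_least)
          fix k
          show "Xn (ssum Xn s B lam (min k m)) \<le> Xn (ssum Xn s B lam m)"
          proof (rule ax2)
            show "ssum Xn s B lam m \<in> borel_measurable lebesgue" by (rule ssum_meas[OF Bm])
            show "ssum Xn s B lam (min k m) \<in> borel_measurable lebesgue"
              by (rule ssum_meas) (rule Bm, simp)
            show "AE x in lebesgue. \<bar>ssum Xn s B lam (min k m) x\<bar> \<le> \<bar>ssum Xn s B lam m x\<bar>"
            proof (rule AE_I2)
              fix x
              have "ssum Xn s B lam (min k m) x \<le> ssum Xn s B lam m x"
                by (rule ssum_mono[OF _ assms(4)]) simp
              then show "\<bar>ssum Xn s B lam (min k m) x\<bar> \<le> \<bar>ssum Xn s B lam m x\<bar>"
                using ssum_nonneg[of Xn s B lam "min k m" x] by simp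
            qed
          qed
        qed
        show "M \<le> ssum_inf_norm Xn s B' lam'"
          unfolding ssum_inf_norm_def M_def using ss[of m] by (metis SUP_upper UNIV_I min.idem)
      qed
      have "\<forall>j. B' j \<in> dballs A D \<and> 0 \<le> lam' j"
        using Bl(1,2) m0 unfolding B'_def lam'_def by simp
      then have inT: "(B', lam') \<in> T"
        unfolding T_def using N Mpos Mfin by simp
      have ct: "(\<Sum>i. ennreal (cterm Xn d q f B' lam' i)) = (\<Sum>i<m. ennreal (cterm Xn d q f B lam i))"
      proof -
        have "(\<Sum>i. ennreal (cterm Xn d q f B' lam' i)) = (\<Sum>i<m. ennreal (cterm Xn d q f B' lam' i))"
          by (rule suminf_finite) (auto simp: cterm_def lam'_def)
        also have "\<dots> = (\<Sum>i<m. ennreal (cterm Xn d q f B lam i))"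
          by (intro sum.cong) (auto simp: cterm_def lam'_def B'_def)
        finally show ?thesis .
      qed
      have "F z = G (B', lam')"
      proof -
        have "(\<Sum>j<m. ennreal (cterm Xn d q f B lam j)) = ennreal C"
          unfolding C_def by (rule sum_ennreal) (simp add: cterm_nonneg Bl(2))
        then show ?thesis unfolding Fz G_def using N ct by simp
      qed
      also have "\<dots> \<le> (SUP z \<in> T. G z)" using inT by (rule SUP_upper)
      finally show ?thesis .
    qed
  qed
  show ?thesis unfolding fin seq
    by (intro antisym SUP_least le1 le2)
qed

end
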